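(* There exist an open set $U\subseteq 2^\omega$ and a closed set $C\subseteq 2^\omega$ such that $\Phi(U)=\Phi(C)$ and this set is a complete $\boldsymbol{\Pi}^0_3$ set.
   Context: $2^\omega$ is the Cantor space with the product topology; for a finite binary sequence $s$, $N_s=\{x\in 2^\omega: s\subset x\}$. $\mu$ is the coin-tossing (Lebesgue) measure on $2^\omega$, i.e. the Borel probability measure with $\mu(N_s)=2^{-\mathrm{lh}(s)}$. For a $\mu$-measurable $A\subseteq 2^\omega$, $\Phi(A)=\{x\in 2^\omega: \lim_{n\to\infty}\mu(A\cap N_{x\restriction n})/\mu(N_{x\restriction n})=1\}$ (the set of points of density $1$ in $A$). $\boldsymbol{\Pi}^0_3$ denotes the class of $F_{\sigma\delta}$ sets, $\boldsymbol{\Sigma}^0_3$ the class of $G_{\delta\sigma}$ sets, $\boldsymbol{\Delta}^0_3=\boldsymbol{\Sigma}^0_3\cap\boldsymbol{\Pi}^0_3$. A set $X\subseteq 2^\omega$ is complete $\boldsymbol{\Pi}^0_3$ if $X\in\boldsymbol{\Pi}^0_3$ and every $\boldsymbol{\Pi}^0_3$ subset of $2^\omega$ is of the form $f^{-1}(X)$ for a continuous $f:2^\omega\to2^\omega$ (equivalently, $X\in\boldsymbol{\Pi}^0_3\setminus\boldsymbol{\Sigma}^0_3$). *)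

theory Defs
  imports "HOL-Analysis.Analysis" "HOL-Probability.Probability"
begin

definition cantor_top :: "(nat \<Rightarrow> bool) topology" where
  "cantor_top = product_topology (\<lambda>_. discrete_topology UNIV) UNIV"

definition nbhd :: "bool list \<Rightarrow> (nat \<Rightarrow> bool) set" where
  "nbhd s = {x. \<forall>i<length s. x i = s ! i}"

definition restr :: "(nat \<Rightarrow> bool) \<Rightarrow> nat \<Rightarrow> bool list" where
  "restr x n = map x [0..<n]"

definition coin_measure :: "(nat \<Rightarrow> bool) measure" where
  "coin_measure = PiM UNIV (\<lambda>_. measure_pmf (bernoulli_pmf (1/2)))"

text \<open>Points of density 1 (measure taken in the completion, i.e. for mu-measurable sets).\<close>
definition density_pts :: "(nat \<Rightarrow> bool) set \<Rightarrow> (nat \<Rightarrow> bool) set" where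
  "density_pts A = {x. (\<lambda>n. measure (completion coin_measure) (A \<inter> nbhd (restr x n))
        / measure (completion coin_measure) (nbhd (restr x n))) \<longlonglongrightarrow> 1}"

definition Pi03 :: "(nat \<Rightarrow> bool) set \<Rightarrow> bool" where
  "Pi03 X \<longleftrightarrow> (\<exists>F :: nat \<Rightarrow> nat \<Rightarrow> (nat \<Rightarrow> bool) set.
      (\<forall>n m. closedin cantor_top (F n m)) \<and> X = (\<Inter>n. \<Union>m. F n m))"

definition complete_Pi03 :: "(nat \<Rightarrow> bool) set \<Rightarrow> bool" where
  "complete_Pi03 X \<longleftrightarrow> Pi03 X \<and>
     (\<forall>Y. Pi03 Y \<longrightarrow> (\<exists>f. continuous_map cantor_top cantor_top f \<and> Y = f -` X))"

end

theory Submission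
  imports Defs
begin

lemma length_restr[simp]: "length (restr x n) = n" by (simp add: restr_def)
lemma restr_Suc: "restr x (Suc n) = restr x n @ [x n]" by (simp add: restr_def)
lemma nth_restr[simp]: "i < n \<Longrightarrow> restr x n ! i = x i" by (simp add: restr_def)
lemma mem_nbhd: "y \<in> nbhd s \<longleftrightarrow> restr y (length s) = s"
proof -
  have "map y [0..<length s] = s \<longleftrightarrow> (\<forall>i<length s. y i = s ! i)"
  proof
    assume "map y [0..<length s] = s"
    then show "\<forall>i<length s. y i = s ! i" by (metis add_0 diff_zero length_upt nth_map nth_upt)
  next
    assume "\<forall>i<length s. y i = s ! i"
    then show "map y [0..<length s] = s" by (intro nth_equalityI) auto
  qed
  then show ?thesis by (simp add: nbhd_def restr_def)
qed
lemma mem_nbhd_restr: "y \<in> nbhd (restr x n) \<longleftrightarrow> restr y n = restr x n"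
  by (simp add: mem_nbhd)
lemma restr_eq_iff: "restr y n = restr x n \<longleftrightarrow> (\<forall>i<n. y i = x i)"
  by (auto simp: restr_def)

lemma topspace_cantor[simp]: "topspace cantor_top = UNIV"
  by (simp add: cantor_top_def)

lemma openin_restr: "openin cantor_top {x. P (restr x n)}"
  unfolding cantor_top_def openin_product_topology_alt
proof (intro ballI)
  fix x assume x: "x \<in> {x. P (restr x n)}"
  define U where "U = (\<lambda>i. if i < n then {x i} else (UNIV::bool set))"
  show "\<exists>U. finite {i \<in> UNIV. U i \<noteq> topspace (discrete_topology UNIV)} \<and>
             (\<forall>i\<in>UNIV. openin (discrete_topology UNIV) (U i)) \<and> x \<in> Pi\<^sub>E UNIV U \<and> Pi\<^sub>E UNIV U \<subseteq> {x. P (restr x n)}"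
  proof (intro exI[of _ U] conjI)
    show "finite {i \<in> UNIV. U i \<noteq> topspace (discrete_topology UNIV)}"
      by (rule finite_subset[of _ "{..<n}"]) (auto simp: U_def)
    show "\<forall>i\<in>UNIV. openin (discrete_topology UNIV) (U i)" by simp
    show "x \<in> Pi\<^sub>E UNIV U" by (auto simp: U_def PiE_iff)
    show "Pi\<^sub>E UNIV U \<subseteq> {x. P (restr x n)}"
    proof
      fix y assume "y \<in> Pi\<^sub>E UNIV U"
      then have "\<forall>i<n. y i = x i" by (metis (full_types) PiE_mem UNIV_I U_def singletonD)
      then have "restr y n = restr x n" by (simp add: restr_eq_iff)
      then show "y \<in> {x. P (restr x n)}" using x by simp
    qed
  qed
qed

lemma closedin_restr: "closedin cantor_top {x. P (restr x n)}"
proof -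
  have "topspace cantor_top - {x. P (restr x n)} = {x. \<not> P (restr x n)}" by auto
  then show ?thesis using openin_restr[of "\<lambda>s. \<not> P s" n] by (simp add: closedin_def)
qed

lemma openin_nbhd: "openin cantor_top (nbhd s)"
proof -
  have "nbhd s = {x. restr x (length s) = s}" by (auto simp: mem_nbhd)
  then show ?thesis using openin_restr by simp
qed

lemma space_coin[simp]: "space coin_measure = UNIV"
  by (simp add: coin_measure_def space_PiM)

lemma prob_coin: "prob_space coin_measure"
  unfolding coin_measure_def by (rule prob_space_PiM) (simp add: prob_space_measure_pmf)

lemma nbhd_sets: "nbhd s \<in> sets coin_measure"
proof -
  have "nbhd s = (\<Inter>i\<in>{..<length s}. {x\<in>space coin_measure. x i = s ! i}) \<inter> space coin_measure"
    by (auto simp: nbhd_def)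
  also have "\<dots> \<in> sets coin_measure" unfolding coin_measure_def
    by measurable
  finally show ?thesis .
qed

lemma emeasure_nbhd: "emeasure coin_measure (nbhd s) = ennreal ((1/2) ^ length s)"
proof -
  let ?M = "\<lambda>_::nat. measure_pmf (bernoulli_pmf (1/2))"
  have eq: "nbhd s = prod_emb UNIV ?M {..<length s} (Pi\<^sub>E {..<length s} (\<lambda>i. {s ! i}))"
    by (auto simp: nbhd_def prod_emb_def PiE_iff restrict_def extensional_def)
  have "emeasure coin_measure (nbhd s) = (\<Prod>i\<in>{..<length s}. emeasure (?M i) {s ! i})"
    unfolding eq coin_measure_def
    by (rule emeasure_PiM_emb) (auto simp: prob_space_measure_pmf)
  also have "\<dots> = (\<Prod>i\<in>{..<length s}. ennreal (1/2))"
    by (intro prod.cong refl) (simp add: emeasure_pmf_single)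
  also have "\<dots> = ennreal ((1/2) ^ length s)" by (subst prod_ennreal) auto
  finally show ?thesis .
qed

lemma measure_nbhd: "measure coin_measure (nbhd s) = (1/2) ^ length s"
  by (simp add: measure_def emeasure_nbhd)

interpretation coin: prob_space coin_measure by (rule prob_coin)

lemma restr_sets: "{x. P (restr x n)} \<in> sets coin_measure"
proof -
  have "{x. P (restr x n)} = (\<Union>s\<in>{s. length s = n \<and> P s}. nbhd s)"
    by (auto simp: mem_nbhd)
  also have "\<dots> \<in> sets coin_measure"
    by (rule sets.countable_UN'') (auto intro: countable_subset[OF subset_UNIV countableI_type] nbhd_sets)
  finally show ?thesis .
qed

definition rho :: "(nat \<Rightarrow> bool) set \<Rightarrow> bool list \<Rightarrow> real" where
  "rho A t = measure coin_measure (A \<inter> nbhd t) / measure coin_measure (nbhd t)"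

lemma nbhd_split: "nbhd t = nbhd (t @ [False]) \<union> nbhd (t @ [True])"
  and nbhd_disj: "nbhd (t @ [False]) \<inter> nbhd (t @ [True]) = {}"
proof -
  show "nbhd t = nbhd (t @ [False]) \<union> nbhd (t @ [True])"
  proof (intro set_eqI iffI)
    fix y assume "y \<in> nbhd t"
    then have "\<forall>i<length t. y i = t ! i" by (simp add: nbhd_def)
    then show "y \<in> nbhd (t @ [False]) \<union> nbhd (t @ [True])"
      by (cases "y (length t)") (auto simp: nbhd_def nth_append less_Suc_eq)
  next
    fix y assume "y \<in> nbhd (t @ [False]) \<union> nbhd (t @ [True])"
    then show "y \<in> nbhd t" by (auto simp: nbhd_def nth_append)
  qed
  show "nbhd (t @ [False]) \<inter> nbhd (t @ [True]) = {}"
  proof (rule ccontr)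
    assume "nbhd (t @ [False]) \<inter> nbhd (t @ [True]) \<noteq> {}"
    then obtain y where "y \<in> nbhd (t @ [False])" "y \<in> nbhd (t @ [True])" by blast
    then have "y (length t) = False" "y (length t) = True"
      unfolding nbhd_def by (auto dest!: spec[of _ "length t"])
    then show False by simp
  qed
qed

lemma rho_split:
  assumes A: "A \<in> sets coin_measure"
  shows "rho A t = (rho A (t @ [False]) + rho A (t @ [True])) / 2"
proof -
  have "A \<inter> nbhd t = (A \<inter> nbhd (t @ [False])) \<union> (A \<inter> nbhd (t @ [True]))"
    using nbhd_split[of t] by auto
  moreover have "measure coin_measure ((A \<inter> nbhd (t @ [False])) \<union> (A \<inter> nbhd (t @ [True]))) =
      measure coin_measure (A \<inter> nbhd (t @ [False])) + measure coin_measure (A \<inter> nbhd (t @ [True]))"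
    by (rule coin.finite_measure_Union) (use nbhd_disj[of t] A nbhd_sets in auto)
  ultimately have "measure coin_measure (A \<inter> nbhd t) =
      measure coin_measure (A \<inter> nbhd (t @ [False])) + measure coin_measure (A \<inter> nbhd (t @ [True]))"
    by simp
  then show ?thesis
    unfolding rho_def measure_nbhd by (simp add: field_simps)
qed

lemma rho_nonneg: "0 \<le> rho A t"
  by (simp add: rho_def measure_nbhd)

lemma rho_le1: "rho A t \<le> 1"
proof -
  have "measure coin_measure (A \<inter> nbhd t) \<le> measure coin_measure (nbhd t)"
    by (rule coin.finite_measure_mono) (auto simp: nbhd_sets)
  then show ?thesis by (simp add: rho_def measure_nbhd)
qed

lemma rho_full: "nbhd t \<subseteq> A \<Longrightarrow> rho A t = 1"
  by (simp add: rho_def measure_nbhd Int_absorb1)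

lemma rho_empty: "A \<inter> nbhd t = {} \<Longrightarrow> rho A t = 0"
  by (simp add: rho_def)

lemma rho_mono: "A \<subseteq> B \<Longrightarrow> B \<in> sets coin_measure \<Longrightarrow> rho A t \<le> rho B t"
  unfolding rho_def measure_nbhd
  by (intro divide_right_mono coin.finite_measure_mono) (auto simp: nbhd_sets)

section \<open>The automaton\<close>

datatype st = G nat | H nat nat | D nat | LU | LV

definition rowj :: "nat \<Rightarrow> nat" where "rowj j = fst (prod_decode j)"

fun step :: "st \<Rightarrow> bool \<Rightarrow> st" where
  "step (G j) b = (if b then H j j else G (Suc j))"
| "step (H j (Suc k)) b = (if b then H j k else LU)"
| "step (H j 0) b = (if b then G (Suc j) else D (rowj j))"
| "step (D (Suc k)) b = (if b then D k else LU)"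
| "step (D 0) b = (if b then LV else LU)"
| "step LU b = LU"
| "step LV b = LV"

definition state :: "bool list \<Rightarrow> st" where "state s = foldl step (G 0) s"

lemma state_snoc: "state (s @ [b]) = step (state s) b" by (simp add: state_def)
lemma state_append: "state (s @ u) = foldl step (state s) u" by (simp add: state_def)
lemma foldl_LU: "foldl step LU u = LU" by (induction u) auto
lemma foldl_LV: "foldl step LV u = LV" by (induction u) auto

fun spine :: "st \<Rightarrow> bool" where
  "spine (G j) = True" | "spine (H j k) = True" | "spine _ = False"

fun idx :: "st \<Rightarrow> nat" where
  "idx (G j) = j" | "idx (H j k) = j" | "idx _ = 0"

lemma nonspine_step: "\<not> spine q \<Longrightarrow> \<not> spine (step q b)"
  by (induction q b rule: step.induct) auto

lemma restr_add: "n \<le> m \<Longrightarrow> restr x m = restr x n @ map x [n..<m]"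
proof -
  assume "n \<le> m"
  then obtain k where "m = n + k" using le_Suc_ex by blast
  then show ?thesis by (simp add: restr_def upt_add_eq_append[of 0 n k])
qed

definition Uo :: "(nat \<Rightarrow> bool) set" where "Uo = {x. \<exists>n. state (restr x n) = LU}"
definition Vo :: "(nat \<Rightarrow> bool) set" where "Vo = {x. \<exists>n. state (restr x n) = LV}"
definition Cc :: "(nat \<Rightarrow> bool) set" where "Cc = - Vo"

lemma Uo_sets: "Uo \<in> sets coin_measure"
proof -
  have "Uo = (\<Union>n. {x. state (restr x n) = LU})" by (auto simp: Uo_def)
  also have "\<dots> \<in> sets coin_measure"
    by (intro sets.countable_UN'') (auto intro: restr_sets)
  finally show ?thesis .
qed

lemma Vo_sets: "Vo \<in> sets coin_measure"
proof -
  have "Vo = (\<Union>n. {x. state (restr x n) = LV})" by (auto simp: Vo_def)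
  also have "\<dots> \<in> sets coin_measure"
    by (intro sets.countable_UN'') (auto intro: restr_sets)
  finally show ?thesis .
qed

lemma Cc_sets: "Cc \<in> sets coin_measure"
proof -
  show ?thesis using sets.compl_sets[OF Vo_sets] by (simp add: Cc_def Compl_eq_Diff_UNIV)
qed

lemma Uo_Vo: "Uo \<inter> Vo = {}"
proof (rule ccontr)
  assume "Uo \<inter> Vo \<noteq> {}"
  then obtain y n m where n: "state (restr y n) = LU" and m: "state (restr y m) = LV"
    by (auto simp: Uo_def Vo_def)
  show False
  proof (cases "n \<le> m")
    case True
    then have "state (restr y m) = LU" using n by (simp add: restr_add[OF True] state_append foldl_LU)
    then show False using m by simp
  next
    case False
    then have "m \<le> n" by simp
    then have "state (restr y n) = LV" using m by (simp add: restr_add[of m n] state_append foldl_LV)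
    then show False using n by simp
  qed
qed

lemma Uo_Cc: "Uo \<subseteq> Cc" using Uo_Vo by (auto simp: Cc_def)

lemma LU_nbhd: "state t = LU \<Longrightarrow> nbhd t \<subseteq> Uo"
  by (auto simp: Uo_def mem_nbhd intro!: exI[of _ "length t"])

lemma LV_nbhd: "state t = LV \<Longrightarrow> nbhd t \<subseteq> Vo"
  by (auto simp: Vo_def mem_nbhd intro!: exI[of _ "length t"])

locale between =
  fixes A
  assumes A1: "Uo \<subseteq> A" and A2: "A \<subseteq> Cc" and A3: "A \<in> sets coin_measure"
begin

lemma rhoLU: "state t = LU \<Longrightarrow> rho A t = 1"
  using LU_nbhd A1 by (intro rho_full) auto

lemma rhoLV: "state t = LV \<Longrightarrow> rho A t = 0"
  using LV_nbhd A2 by (intro rho_empty) (auto simp: Cc_def)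

lemma split: "rho A t = (rho A (t @ [False]) + rho A (t @ [True])) / 2"
  by (rule rho_split[OF A3])

lemma rhoD: "state t = D k \<Longrightarrow> rho A t = 1 - (1/2) ^ Suc k"
proof (induction k arbitrary: t)
  case 0
  then show ?case using split[of t] rhoLU[of "t @ [False]"] rhoLV[of "t @ [True]"]
    by (simp add: state_snoc)
next
  case (Suc k)
  then show ?case using split[of t] rhoLU[of "t @ [False]"] Suc.IH[of "t @ [True]"]
    by (simp add: state_snoc field_simps)
qed

lemma rhoH1: "state t = H j k \<Longrightarrow> 1 - rho A t \<le> (1/2) ^ k"
proof (induction k arbitrary: t)
  case 0
  then show ?case using rho_nonneg[of A t] by simp
next
  case (Suc k)
  have a: "1 - rho A (t @ [True]) \<le> (1/2) ^ k" using Suc by (simp add: state_snoc)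
  have b: "rho A (t @ [False]) = 1" using Suc.prems rhoLU by (simp add: state_snoc)
  have "1 - rho A t = (1 - rho A (t @ [True])) / 2" using split[of t] b by simp
  also have "\<dots> \<le> (1/2) ^ k / 2" using a by simp
  finally show ?case by simp
qed

lemma rhoG_aux: "state t = G j \<Longrightarrow> 1 - rho A t \<le> (1/2) ^ m + (1/2) ^ j"
proof (induction m arbitrary: t j)
  case 0
  have "1 - rho A t \<le> 1" using rho_nonneg[of A t] by simp
  moreover have "1 \<le> (1/2::real) ^ 0 + (1/2) ^ j" by simp
  ultimately show ?case by linarith
next
  case (Suc m)
  have a: "1 - rho A (t @ [False]) \<le> (1/2) ^ m + (1/2) ^ Suc j"
    using Suc.IH[of "t @ [False]" "Suc j"] Suc.prems by (simp add: state_snoc)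
  have b: "1 - rho A (t @ [True]) \<le> (1/2) ^ j"
    using rhoH1[of "t @ [True]" j j] Suc.prems by (simp add: state_snoc)
  have "1 - rho A t = ((1 - rho A (t @ [False])) + (1 - rho A (t @ [True]))) / 2"
    using split[of t] by simp
  also have "\<dots> \<le> ((1/2) ^ m + (1/2) ^ Suc j + (1/2) ^ j) / 2"
    using a b by simp
  also have "\<dots> \<le> (1/2) ^ Suc m + (1/2) ^ j" by simp
  finally show ?case .
qed

lemma rhoG: "state t = G j \<Longrightarrow> 1 - rho A t \<le> (1/2) ^ j"
proof (rule ccontr)
  assume s: "state t = G j" and "\<not> 1 - rho A t \<le> (1/2) ^ j"
  then have "0 < 1 - rho A t - (1/2) ^ j" by simp
  then obtain m where "(1/2::real) ^ m < 1 - rho A t - (1/2) ^ j"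
    using real_arch_pow_inv[of "1 - rho A t - (1/2) ^ j" "1/2"] by auto
  then show False using rhoG_aux[OF s, of m] by simp
qed

definition beta :: "nat \<Rightarrow> real" where
  "beta j = ((1/2) ^ Suc (rowj j) + (1/2) ^ Suc j) / 2"

lemma rhoH: "state t = H j k \<Longrightarrow> 1 - rho A t \<le> beta j"
proof (induction k arbitrary: t)
  case 0
  have a: "1 - rho A (t @ [False]) = (1/2) ^ Suc (rowj j)"
    using rhoD[of "t @ [False]" "rowj j"] 0 by (simp add: state_snoc)
  have b: "1 - rho A (t @ [True]) \<le> (1/2) ^ Suc j"
    using rhoG[of "t @ [True]" "Suc j"] 0 by (simp add: state_snoc)
  have "1 - rho A t = ((1 - rho A (t @ [False])) + (1 - rho A (t @ [True]))) / 2"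
    using split[of t] by simp
  then show ?case using a b by (simp add: beta_def)
next
  case (Suc k)
  have "0 \<le> beta j" by (simp add: beta_def)
  then show ?case using split[of t] rhoLU[of "t @ [False]"] Suc.IH[of "t @ [True]"] Suc.prems
    by (simp add: state_snoc field_simps)
qed

lemma rhoO: "state t = H j 0 \<Longrightarrow> (1/2) ^ Suc (rowj j) / 2 \<le> 1 - rho A t"
proof -
  assume s: "state t = H j 0"
  have a: "1 - rho A (t @ [False]) = (1/2) ^ Suc (rowj j)"
    using rhoD[of "t @ [False]" "rowj j"] s by (simp add: state_snoc)
  have b: "0 \<le> 1 - rho A (t @ [True])" using rho_le1[of A] by simp
  have "1 - rho A t = ((1 - rho A (t @ [False])) + (1 - rho A (t @ [True]))) / 2"
    using split[of t] by simp
  then show ?thesis using a b by simp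
qed

end

interpretation bU: between Uo using Uo_Cc Uo_sets by unfold_locales auto
interpretation bC: between Cc using Uo_Cc Cc_sets by unfold_locales auto

lemma nonspine_eq: "\<not> spine (state t) \<Longrightarrow> rho Uo t = rho Cc t"
  by (cases "state t") (auto simp: bU.rhoLU bC.rhoLU bU.rhoLV bC.rhoLV bU.rhoD bC.rhoD)

lemma s_Suc: "state (restr x (Suc p)) = step (state (restr x p)) (x p)"
  by (simp add: restr_Suc state_snoc)

lemma state0: "state (restr x 0) = G 0" by (simp add: restr_def state_def)

lemma idx_step: "spine q \<Longrightarrow> spine (step q b) \<Longrightarrow> idx q \<le> idx (step q b)"
  by (induction q b rule: step.induct) auto

definition Jx :: "(nat \<Rightarrow> bool) \<Rightarrow> nat set" where
  "Jx x = {j. \<exists>p. state (restr x p) = H j 0}"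

definition Cond :: "(nat \<Rightarrow> bool) \<Rightarrow> bool" where
  "Cond x \<longleftrightarrow> (\<forall>n. finite {j \<in> Jx x. rowj j = n})"

context
  fixes x :: "nat \<Rightarrow> bool"
  assumes sp: "\<forall>p. spine (state (restr x p))"
begin

lemma P1: "state (restr x p) = H j k \<Longrightarrow> \<exists>p'. state (restr x p') = H j 0 \<and> p \<le> p'"
proof (induction k arbitrary: p)
  case 0 then show ?case by auto
next
  case (Suc k)
  have "spine (state (restr x (Suc p)))" using sp by blast
  then have "x p" using Suc.prems s_Suc[of x p] by (cases "x p") auto
  then have "state (restr x (Suc p)) = H j k" using Suc.prems s_Suc[of x p] by simp
  from Suc.IH[OF this] show ?case by (auto intro: le_SucI)
qed

lemma P2: "state (restr x p) = H j k \<Longrightarrow> \<exists>p'>p. state (restr x p') = G (Suc j)"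
proof -
  assume "state (restr x p) = H j k"
  from P1[OF this] obtain p' where p': "state (restr x p') = H j 0" "p \<le> p'" by blast
  have "spine (state (restr x (Suc p')))" using sp by blast
  then have "x p'" using p' s_Suc[of x p'] by (cases "x p'") auto
  then have "state (restr x (Suc p')) = G (Suc j)" using p' s_Suc[of x p'] by simp
  then show ?thesis using p' by (intro exI[of _ "Suc p'"]) auto
qed

lemma P3: "state (restr x p) = G j \<Longrightarrow> \<exists>p'>p. state (restr x p') = G (Suc j)"
proof -
  assume a: "state (restr x p) = G j"
  show ?thesis
  proof (cases "x p")
    case True
    then have "state (restr x (Suc p)) = H j j" using a s_Suc[of x p] by simp
    from P2[OF this] show ?thesis by (auto intro: Suc_lessD)
  next
    case False
    then have "state (restr x (Suc p)) = G (Suc j)" using a s_Suc[of x p] by simp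
    then show ?thesis by (intro exI[of _ "Suc p"]) auto
  qed
qed

lemma P4: "\<exists>p. state (restr x p) = G j"
proof (induction j)
  case 0 then show ?case using state0 by blast
next
  case (Suc j) then show ?case using P3 by blast
qed

lemma P5: "idx (state (restr x p)) \<le> idx (state (restr x (Suc p)))"
proof -
  have "spine (step (state (restr x p)) (x p))" using sp s_Suc[of x p] by metis
  then show ?thesis using idx_step[of "state (restr x p)" "x p"] sp s_Suc[of x p] by simp
qed

lemma P6: "\<exists>P. \<forall>p\<ge>P. m \<le> idx (state (restr x p))"
proof -
  obtain P where P: "state (restr x P) = G m" using P4 by blast
  have "\<forall>p\<ge>P. idx (state (restr x P)) \<le> idx (state (restr x p))"
  proof (intro allI impI)
    fix p assume "P \<le> p"
    then show "idx (state (restr x P)) \<le> idx (state (restr x p))"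
    proof (induction p rule: dec_induct)
      case base then show ?case by simp
    next
      case (step p) then show ?case using P5[of p] by simp
    qed
  qed
  then show ?thesis using P by auto
qed

lemma spine_cases:
  obtains j where "state (restr x p) = G j" | j k where "state (restr x p) = H j k"
  using sp[rule_format, of p] by (cases "state (restr x p)") auto

end

context between
begin

lemma char:
  assumes sp: "\<forall>p. spine (state (restr x p))"
  shows "(\<lambda>p. rho A (restr x p)) \<longlonglongrightarrow> 1 \<longleftrightarrow> Cond x"
proof
  assume lim: "(\<lambda>p. rho A (restr x p)) \<longlonglongrightarrow> 1"
  show "Cond x"
    unfolding Cond_def
  proof (rule ccontr)
    assume "\<not> (\<forall>n. finite {j \<in> Jx x. rowj j = n})"
    then obtain n where inf: "infinite {j \<in> Jx x. rowj j = n}" by blast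
    have r: "0 < (1/2::real) ^ Suc n / 2" by simp
    obtain P where P: "\<forall>p\<ge>P. norm (rho A (restr x p) - 1) < (1/2) ^ Suc n / 2"
      using LIMSEQ_D[OF lim r] by blast
    have "{j \<in> Jx x. rowj j = n} \<subseteq> (\<lambda>p. idx (state (restr x p))) ` {..<P}"
    proof
      fix j assume j: "j \<in> {j \<in> Jx x. rowj j = n}"
      then obtain p where p: "state (restr x p) = H j 0" by (auto simp: Jx_def)
      have "(1/2) ^ Suc (rowj j) / 2 \<le> 1 - rho A (restr x p)" using rhoO[OF p] .
      moreover have "norm (rho A (restr x p) - 1) = 1 - rho A (restr x p)"
        using rho_le1[of A "restr x p"] by simp
      ultimately have "\<not> norm (rho A (restr x p) - 1) < (1/2) ^ Suc n / 2"
        using j by simp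
      then have "p < P" using P by (meson not_le)
      then show "j \<in> (\<lambda>p. idx (state (restr x p))) ` {..<P}"
        using p by (auto intro!: image_eqI[of _ _ p])
    qed
    then show False using inf finite_subset by blast
  qed
next
  assume c: "Cond x"
  show "(\<lambda>p. rho A (restr x p)) \<longlonglongrightarrow> 1"
  proof (rule LIMSEQ_I)
    fix r :: real assume r: "0 < r"
    obtain N where N: "(1/2::real) ^ N < r" using real_arch_pow_inv[OF r, of "1/2"] by auto
    let ?F = "{j \<in> Jx x. rowj j \<le> N}"
    have "?F \<subseteq> (\<Union>n\<in>{..N}. {j \<in> Jx x. rowj j = n})" by auto
    moreover have "finite (\<Union>n\<in>{..N}. {j \<in> Jx x. rowj j = n})"
      using c by (auto simp: Cond_def)
    ultimately have "finite ?F" by (rule finite_subset)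
    then obtain K where K: "?F \<subseteq> {..<K}" using finite_nat_bounded by blast
    obtain P where P: "\<forall>p\<ge>P. max K N \<le> idx (state (restr x p))" using P6[OF sp] by blast
    have "\<forall>p\<ge>P. norm (rho A (restr x p) - 1) < r"
    proof (intro allI impI)
      fix p assume "P \<le> p"
      then have ix: "max K N \<le> idx (state (restr x p))" using P by blast
      have "1 - rho A (restr x p) \<le> (1/2) ^ N"
      proof (cases rule: spine_cases[OF sp, of p])
        case (1 j)
        then have "N \<le> j" using ix by simp
        then have "(1/2::real) ^ j \<le> (1/2) ^ N" by (intro power_decreasing) auto
        then show ?thesis using rhoG[OF 1] by linarith
      next
        case (2 j k)
        then have jK: "K \<le> j" "N \<le> j" using ix by auto
        have "j \<in> Jx x" using P1[OF sp 2] by (auto simp: Jx_def)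
        have "j \<notin> ?F" using K jK by auto
        then have "N < rowj j" using \<open>j \<in> Jx x\<close> by simp
        have a: "(1/2::real) ^ Suc (rowj j) \<le> (1/2) ^ N"
          using \<open>N < rowj j\<close> by (intro power_decreasing) auto
        have b: "(1/2::real) ^ Suc j \<le> (1/2) ^ N"
          using jK by (intro power_decreasing) auto
        show ?thesis using rhoH[OF 2] a b by (simp add: beta_def)
      qed
      then show "norm (rho A (restr x p) - 1) < r"
        using N rho_le1[of A "restr x p"] by simp
    qed
    then show "\<exists>no. \<forall>p\<ge>no. norm (rho A (restr x p) - 1) < r" by blast
  qed
qed

end

section \<open>Coding bit sequences into spine paths\<close>

definition ch :: "(nat \<Rightarrow> bool) \<Rightarrow> st \<Rightarrow> bool" where
  "ch b q = (case q of G j \<Rightarrow> b j | _ \<Rightarrow> True)"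

primrec run :: "(nat \<Rightarrow> bool) \<Rightarrow> nat \<Rightarrow> st" where
  "run b 0 = G 0"
| "run b (Suc p) = step (run b p) (ch b (run b p))"

definition out :: "(nat \<Rightarrow> bool) \<Rightarrow> nat \<Rightarrow> bool" where
  "out b p = ch b (run b p)"

lemma state_out: "state (restr (out b) p) = run b p"
proof (induction p)
  case 0 then show ?case by (simp add: restr_def state_def)
next
  case (Suc p) then show ?case by (simp add: restr_Suc state_snoc out_def)
qed

lemma stepH_True: "step (H j k) True = (case k of 0 \<Rightarrow> G (Suc j) | Suc k' \<Rightarrow> H j k')"
  by (cases k) auto

lemma spine_ch: "spine q \<Longrightarrow> spine (step q (ch b q))"
  by (cases q) (auto simp: ch_def stepH_True split: nat.split)

lemma run_spine: "spine (run b p)"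
  by (induction p) (auto simp: spine_ch)

lemma step_H_inv: "step q c = H j k \<Longrightarrow> (q = G j \<and> c \<and> k = j) \<or> (q = H j (Suc k) \<and> c)"
  by (induction q c rule: step.induct) (auto split: if_splits)

lemma run_H_b: "run b p = H j k \<Longrightarrow> b j"
proof (induction p arbitrary: k)
  case 0 then show ?case by simp
next
  case (Suc p)
  from step_H_inv[OF Suc.prems[simplified]] show ?case
  proof
    assume "run b p = G j \<and> ch b (run b p) \<and> k = j"
    then show ?thesis by (auto simp: ch_def)
  next
    assume "run b p = H j (Suc k) \<and> ch b (run b p)"
    then show ?thesis using Suc.IH by blast
  qed
qed

lemma out_spine: "\<forall>p. spine (state (restr (out b) p))"
  by (simp add: state_out run_spine)

lemma Jx_out: "Jx (out b) = {j. b j}"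
proof (intro set_eqI iffI)
  fix j assume "j \<in> Jx (out b)"
  then show "j \<in> {j. b j}" by (auto simp: Jx_def state_out intro: run_H_b)
next
  fix j assume bj: "j \<in> {j. b j}"
  obtain p where p: "state (restr (out b) p) = G j" using P4[OF out_spine] by blast
  then have "run b p = G j" by (simp add: state_out)
  then have "run b (Suc p) = H j j" using bj by (simp add: ch_def)
  then have "state (restr (out b) (Suc p)) = H j j" by (simp add: state_out)
  from P1[OF out_spine this] show "j \<in> Jx (out b)" by (auto simp: Jx_def)
qed

lemma idx_step_le: "idx (step q c) \<le> Suc (idx q)"
  by (induction q c rule: step.induct) auto

lemma idx_run: "idx (run b p) \<le> p"
proof (induction p)
  case 0 then show ?case by simp
next
  case (Suc p) then show ?case using idx_step_le[of "run b p" "ch b (run b p)"] by simp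
qed

lemma ch_eq: "\<forall>i\<le>p. b i = b' i \<Longrightarrow> idx q \<le> p \<Longrightarrow> ch b q = ch b' q"
  by (cases q) (auto simp: ch_def)

lemma run_dep: "\<forall>i\<le>p. b i = b' i \<Longrightarrow> run b p = run b' p"
proof (induction p)
  case 0 then show ?case by simp
next
  case (Suc p)
  then have e: "run b p = run b' p" by simp
  have "ch b (run b p) = ch b' (run b p)"
    using Suc.prems idx_run[of b p] by (intro ch_eq[of "Suc p"]) auto
  then show ?case using e by simp
qed

lemma out_dep: "\<forall>i\<le>p. b i = b' i \<Longrightarrow> out b p = out b' p"
  using run_dep[of p b b'] ch_eq[of p b b' "run b p"] idx_run[of b p] by (simp add: out_def)

lemma closed_sep:
  assumes "closedin cantor_top S" "x \<notin> S"
  shows "\<exists>k. nbhd (restr x k) \<inter> S = {}"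
proof -
  have "openin cantor_top (UNIV - S)" using assms(1) by (simp add: closedin_def)
  then have "\<forall>x\<in>UNIV - S. \<exists>U. finite {i \<in> UNIV. U i \<noteq> topspace (discrete_topology UNIV)} \<and>
                 (\<forall>i\<in>UNIV. openin (discrete_topology UNIV) (U i)) \<and> x \<in> Pi\<^sub>E UNIV U \<and> Pi\<^sub>E UNIV U \<subseteq> UNIV - S"
    unfolding cantor_top_def openin_product_topology_alt .
  moreover have "x \<in> UNIV - S" using assms(2) by simp
  ultimately obtain U :: "nat \<Rightarrow> bool set" where U0: "finite {i \<in> UNIV. U i \<noteq> topspace (discrete_topology UNIV)}"
     "x \<in> Pi\<^sub>E UNIV U" "Pi\<^sub>E UNIV U \<subseteq> UNIV - S"
    by blast
  then have U: "finite {i. U i \<noteq> UNIV}" "x \<in> Pi\<^sub>E UNIV U" "Pi\<^sub>E UNIV U \<subseteq> UNIV - S" by auto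
  obtain k where k: "{i. U i \<noteq> UNIV} \<subseteq> {..<k}" using finite_nat_bounded[OF U(1)] by blast
  have "nbhd (restr x k) \<subseteq> Pi\<^sub>E UNIV U"
  proof
    fix y assume "y \<in> nbhd (restr x k)"
    then have y: "\<forall>i<k. y i = x i" by (simp add: mem_nbhd_restr restr_eq_iff)
    have "y i \<in> U i" for i
    proof (cases "U i = UNIV")
      case True then show ?thesis by simp
    next
      case False
      then have "i < k" using k by auto
      then show ?thesis using y U(2) by auto
    qed
    then show "y \<in> Pi\<^sub>E UNIV U" by auto
  qed
  then have "nbhd (restr x k) \<inter> S = {}" using U(3) by blast
  then show ?thesis by blast
qed

lemma cont_lemma:
  assumes "\<And>p. \<exists>N. \<forall>x x'. restr x N = restr x' N \<longrightarrow> f x p = f x' p"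
  shows "continuous_map cantor_top cantor_top f"
proof -
  have "continuous_map cantor_top (product_topology (\<lambda>_. discrete_topology UNIV) UNIV) f"
    unfolding continuous_map_componentwise_UNIV
  proof
    fix p
    obtain N where N: "\<forall>x x'. restr x N = restr x' N \<longrightarrow> f x p = f x' p" using assms by blast
    show "continuous_map cantor_top (discrete_topology UNIV) (\<lambda>x. f x p)"
      unfolding continuous_map_def
    proof (intro conjI allI impI)
      show "(\<lambda>x. f x p) \<in> topspace cantor_top \<rightarrow> topspace (discrete_topology UNIV)" by simp
      fix V :: "bool set"
      have "{x \<in> topspace cantor_top. f x p \<in> V} = {x. (\<lambda>s. \<exists>x'. restr x' N = s \<and> f x' p \<in> V) (restr x N)}"
      proof (intro set_eqI iffI)
        fix x assume "x \<in> {x \<in> topspace cantor_top. f x p \<in> V}"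
        then show "x \<in> {x. (\<lambda>s. \<exists>x'. restr x' N = s \<and> f x' p \<in> V) (restr x N)}" by blast
      next
        fix x assume "x \<in> {x. (\<lambda>s. \<exists>x'. restr x' N = s \<and> f x' p \<in> V) (restr x N)}"
        then obtain x' where "restr x' N = restr x N" "f x' p \<in> V" by blast
        moreover have "f x' p = f x p" using N calculation(1) by blast
        ultimately show "x \<in> {x \<in> topspace cantor_top. f x p \<in> V}" by simp
      qed
      then show "openin cantor_top {x \<in> topspace cantor_top. f x p \<in> V}"
        using openin_restr by simp
    qed
  qed
  then show ?thesis by (simp add: cantor_top_def)
qed

lemma nbhd_restr_mono: "k \<le> k' \<Longrightarrow> nbhd (restr x k') \<subseteq> nbhd (restr x k)"
  by (auto simp: mem_nbhd_restr restr_eq_iff)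

section \<open>Sigma^0_2 reduction\<close>

definition pp :: "(nat \<Rightarrow> nat \<Rightarrow> (nat \<Rightarrow> bool) set) \<Rightarrow> nat \<Rightarrow> (nat \<Rightarrow> bool) \<Rightarrow> nat \<Rightarrow> nat" where
  "pp F n x k = (LEAST m. m = k \<or> (\<exists>i\<le>m. nbhd (restr x k) \<inter> F n i \<noteq> {}))"

definition cc where "cc F n x k \<longleftrightarrow> pp F n x (Suc k) \<noteq> pp F n x k"

definition bb where "bb F x j = cc F (fst (prod_decode j)) x (snd (prod_decode j))"

lemma pp_le: "pp F n x k \<le> k"
  unfolding pp_def by (rule Least_le) simp

lemma pp_prop: "pp F n x k = k \<or> (\<exists>i\<le>pp F n x k. nbhd (restr x k) \<inter> F n i \<noteq> {})"
  unfolding pp_def by (rule LeastI[of _ k]) simp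

lemma pp_mono_Suc: "pp F n x k \<le> pp F n x (Suc k)"
proof -
  from pp_prop[of F n x "Suc k"] show ?thesis
  proof
    assume "pp F n x (Suc k) = Suc k"
    then show ?thesis using pp_le[of F n x k] by simp
  next
    assume "\<exists>i\<le>pp F n x (Suc k). nbhd (restr x (Suc k)) \<inter> F n i \<noteq> {}"
    then obtain i where i: "i \<le> pp F n x (Suc k)" "nbhd (restr x (Suc k)) \<inter> F n i \<noteq> {}" by blast
    have sub: "nbhd (restr x (Suc k)) \<subseteq> nbhd (restr x k)" by (rule nbhd_restr_mono) simp
    have ne: "nbhd (restr x k) \<inter> F n i \<noteq> {}" using i(2) sub by blast
    have "pp F n x k \<le> i" unfolding pp_def by (rule Least_le) (use ne in blast)
    then show ?thesis using i(1) by linarith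
  qed
qed

lemma pp_mono: "k \<le> k' \<Longrightarrow> pp F n x k \<le> pp F n x k'"
  by (rule lift_Suc_mono_le[where f="pp F n x"]) (rule pp_mono_Suc)

lemma pp_mem: "x \<in> F n i \<Longrightarrow> pp F n x k \<le> i"
proof -
  assume "x \<in> F n i"
  moreover have "x \<in> nbhd (restr x k)" by (simp add: mem_nbhd_restr)
  ultimately have "nbhd (restr x k) \<inter> F n i \<noteq> {}" by blast
  then show ?thesis unfolding pp_def by - (rule Least_le, blast)
qed

lemma pp_bdd:
  assumes cl: "\<forall>n m. closedin cantor_top (F n m)" and B: "\<forall>k. pp F n x k \<le> B"
  shows "\<exists>i. x \<in> F n i"
proof (rule ccontr)
  assume "\<not> (\<exists>i. x \<in> F n i)"
  then have "\<forall>i. \<exists>k. nbhd (restr x k) \<inter> F n i = {}" using closed_sep cl by blast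
  then obtain kf where kf: "\<And>i. nbhd (restr x (kf i)) \<inter> F n i = {}" by metis
  define K where "K = max (Suc B) (Max (kf ` {..B}))"
  have dis: "nbhd (restr x K) \<inter> F n i = {}" if "i \<le> B" for i
  proof -
    have "kf i \<le> Max (kf ` {..B})" using that by (auto intro!: Max_ge)
    then have "kf i \<le> K" by (simp add: K_def)
    then show ?thesis using kf[of i] nbhd_restr_mono[of "kf i" K x] by blast
  qed
  have "pp F n x K \<le> B" using B by blast
  moreover have "B < K" by (simp add: K_def)
  ultimately have "\<exists>i\<le>pp F n x K. nbhd (restr x K) \<inter> F n i \<noteq> {}" using pp_prop[of F n x K] by auto
  then show False using dis \<open>pp F n x K \<le> B\<close> by (meson order_trans)
qed

lemma fin_iff: "finite {k. cc F n x k} \<longleftrightarrow> (\<exists>B. \<forall>k. pp F n x k \<le> B)"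
proof
  assume "finite {k. cc F n x k}"
  then obtain K where K: "{k. cc F n x k} \<subseteq> {..<K}" using finite_nat_bounded by blast
  have eq: "pp F n x k = pp F n x K" if "K \<le> k" for k
    using that
  proof (induction k rule: dec_induct)
    case base then show ?case by simp
  next
    case (step k)
    then have "\<not> cc F n x k" using K by auto
    then show ?case using step.IH by (simp add: cc_def)
  qed
  have "pp F n x k \<le> max K (pp F n x K)" for k
  proof (cases "K \<le> k")
    case True then show ?thesis using eq[OF True] by simp
  next
    case False then show ?thesis using pp_le[of F n x k] by simp
  qed
  then show "\<exists>B. \<forall>k. pp F n x k \<le> B" by blast
next
  assume "\<exists>B. \<forall>k. pp F n x k \<le> B"
  then obtain B where B: "\<forall>k. pp F n x k \<le> B" by blast
  have "range (pp F n x) \<subseteq> {..B}" using B by auto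
  then have fin: "finite (range (pp F n x))" using finite_subset by blast
  let ?M = "Max (range (pp F n x))"
  have "?M \<in> range (pp F n x)" using fin by (intro Max_in) auto
  then obtain K where K: "pp F n x K = ?M" by auto
  have "pp F n x k = ?M" if "K \<le> k" for k
    using pp_mono[OF that, of F n x] K Max_ge[OF fin, of "pp F n x k"] by simp
  then have "{k. cc F n x k} \<subseteq> {..<K}"
  proof (intro subsetI)
    fix k assume eqM: "\<And>k. K \<le> k \<Longrightarrow> pp F n x k = ?M" and "k \<in> {k. cc F n x k}"
    then have c: "cc F n x k" by simp
    show "k \<in> {..<K}"
    proof (rule ccontr)
      assume "k \<notin> {..<K}"
      then have "K \<le> k" by simp
      then have "pp F n x k = ?M" "pp F n x (Suc k) = ?M" using eqM by auto
      then show False using c by (simp add: cc_def)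
    qed
  qed
  then show "finite {k. cc F n x k}" using finite_subset by blast
qed

lemma mem_iff:
  assumes cl: "\<forall>n m. closedin cantor_top (F n m)"
  shows "(\<exists>i. x \<in> F n i) \<longleftrightarrow> finite {k. cc F n x k}"
  using pp_bdd[OF cl] pp_mem fin_iff by metis

lemma row_set: "{j. bb F x j \<and> rowj j = n} = (\<lambda>k. prod_encode (n, k)) ` {k. cc F n x k}"
proof (intro set_eqI iffI)
  fix j assume j: "j \<in> {j. bb F x j \<and> rowj j = n}"
  then have e: "prod_decode j = (n, snd (prod_decode j))" by (simp add: rowj_def prod_eq_iff)
  then have "j = prod_encode (n, snd (prod_decode j))" by (metis prod_decode_inverse)
  then show "j \<in> (\<lambda>k. prod_encode (n, k)) ` {k. cc F n x k}"
    using j by (auto simp: bb_def rowj_def)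
next
  fix j assume "j \<in> (\<lambda>k. prod_encode (n, k)) ` {k. cc F n x k}"
  then show "j \<in> {j. bb F x j \<and> rowj j = n}" by (auto simp: bb_def rowj_def)
qed

lemma row_fin: "finite {j. bb F x j \<and> rowj j = n} \<longleftrightarrow> finite {k. cc F n x k}"
proof -
  have "inj (\<lambda>k. prod_encode (n, k))" by (auto intro!: injI simp: prod_encode_eq)
  then show ?thesis unfolding row_set by (simp add: finite_image_iff inj_on_subset[OF _ subset_UNIV])
qed

lemma pp_dep: "restr x k = restr x' k \<Longrightarrow> pp F n x k = pp F n x' k"
  by (simp add: pp_def)

lemma restr_eq_le: "restr x N = restr x' N \<Longrightarrow> k \<le> N \<Longrightarrow> restr x k = restr x' k"
  by (simp add: restr_eq_iff)

lemma bb_dep: "restr x (Suc j) = restr x' (Suc j) \<Longrightarrow> bb F x j = bb F x' j"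
proof -
  assume a: "restr x (Suc j) = restr x' (Suc j)"
  let ?k = "snd (prod_decode j)"
  have "?k \<le> prod_encode (prod_decode j)" by (cases "prod_decode j") (simp add: le_prod_encode_2)
  then have "?k \<le> j" by simp
  then have "restr x ?k = restr x' ?k" "restr x (Suc ?k) = restr x' (Suc ?k)"
    using restr_eq_le[OF a] by auto
  then have "pp F (fst (prod_decode j)) x ?k = pp F (fst (prod_decode j)) x' ?k"
    "pp F (fst (prod_decode j)) x (Suc ?k) = pp F (fst (prod_decode j)) x' (Suc ?k)"
    by (blast intro: pp_dep)+
  then show ?thesis unfolding bb_def cc_def by argo
qed

lemma f_dep: "restr x (Suc p) = restr x' (Suc p) \<Longrightarrow> out (bb F x) p = out (bb F x') p"
proof -
  assume a: "restr x (Suc p) = restr x' (Suc p)"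
  have "\<forall>i\<le>p. bb F x i = bb F x' i"
  proof (intro allI impI)
    fix i assume "i \<le> p"
    then have "restr x (Suc i) = restr x' (Suc i)" using restr_eq_le[OF a, of "Suc i"] by simp
    then show "bb F x i = bb F x' i" by (rule bb_dep)
  qed
  then show ?thesis by (rule out_dep)
qed

lemma f_cont: "continuous_map cantor_top cantor_top (\<lambda>x. out (bb F x))"
  by (rule cont_lemma) (use f_dep in blast)

lemma dens_eq:
  assumes "A \<in> sets coin_measure"
  shows "density_pts A = {x. (\<lambda>n. rho A (restr x n)) \<longlonglongrightarrow> 1}"
proof -
  have "measure (completion coin_measure) (A \<inter> nbhd t) = measure coin_measure (A \<inter> nbhd t)"
    "measure (completion coin_measure) (nbhd t) = measure coin_measure (nbhd t)" for t
    using assms nbhd_sets by (auto intro!: measure_completion)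
  then show ?thesis unfolding density_pts_def rho_def by simp
qed

lemma Uo_open: "openin cantor_top Uo"
proof -
  have "Uo = \<Union>(range (\<lambda>n. {x. state (restr x n) = LU}))" by (auto simp: Uo_def)
  moreover have "openin cantor_top (\<Union>(range (\<lambda>n. {x. state (restr x n) = LU})))"
    by (intro openin_Union) (auto intro: openin_restr)
  ultimately show ?thesis by simp
qed

lemma Vo_open: "openin cantor_top Vo"
proof -
  have "Vo = \<Union>(range (\<lambda>n. {x. state (restr x n) = LV}))" by (auto simp: Vo_def)
  moreover have "openin cantor_top (\<Union>(range (\<lambda>n. {x. state (restr x n) = LV})))"
    by (intro openin_Union) (auto intro: openin_restr)
  ultimately show ?thesis by simp
qed

lemma Cc_closed: "closedin cantor_top Cc"
  unfolding closedin_def Cc_def using Vo_open by (simp add: Compl_eq_Diff_UNIV double_diff)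

lemma nonspine_after:
  assumes "\<not> spine (state (restr x p0))" "p0 \<le> p"
  shows "\<not> spine (state (restr x p))"
  using assms(2)
proof (induction p rule: dec_induct)
  case base then show ?case using assms(1) .
next
  case (step p) then show ?case using nonspine_step s_Suc[of x p] by simp
qed

lemma dens_UC: "density_pts Uo = density_pts Cc"
proof -
  have "(\<lambda>n. rho Uo (restr x n)) \<longlonglongrightarrow> 1 \<longleftrightarrow> (\<lambda>n. rho Cc (restr x n)) \<longlonglongrightarrow> 1" for x
  proof (cases "\<forall>p. spine (state (restr x p))")
    case True
    then show ?thesis using bU.char bC.char by blast
  next
    case False
    then obtain p0 where "\<not> spine (state (restr x p0))" by blast
    then have "\<forall>p\<ge>p0. rho Uo (restr x p) = rho Cc (restr x p)"
      using nonspine_after nonspine_eq by blast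
    then have "eventually (\<lambda>p. rho Uo (restr x p) = rho Cc (restr x p)) sequentially"
      using eventually_sequentially by blast
    then show ?thesis by (rule tendsto_cong)
  qed
  then show ?thesis using dens_eq[OF Uo_sets] dens_eq[OF Cc_sets] by auto
qed

lemma lim_iff:
  assumes "\<And>n. X n \<le> (1::real)"
  shows "X \<longlonglongrightarrow> 1 \<longleftrightarrow> (\<forall>k. \<exists>N. \<forall>n\<ge>N. 1 - 1 / real (Suc k) \<le> X n)"
proof
  assume lim: "X \<longlonglongrightarrow> 1"
  show "\<forall>k. \<exists>N. \<forall>n\<ge>N. 1 - 1 / real (Suc k) \<le> X n"
  proof
    fix k
    have "0 < 1 / real (Suc k)" by simp
    from LIMSEQ_D[OF lim this] obtain N where "\<forall>n\<ge>N. norm (X n - 1) < 1 / real (Suc k)" by blast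
    then show "\<exists>N. \<forall>n\<ge>N. 1 - 1 / real (Suc k) \<le> X n"
      by (intro exI[of _ N]) (auto simp: abs_if split: if_splits)
  qed
next
  assume h: "\<forall>k. \<exists>N. \<forall>n\<ge>N. 1 - 1 / real (Suc k) \<le> X n"
  show "X \<longlonglongrightarrow> 1"
  proof (rule LIMSEQ_I)
    fix r :: real assume "0 < r"
    then obtain k where k: "inverse (real (Suc k)) < r" using reals_Archimedean by blast
    obtain N where N: "\<forall>n\<ge>N. 1 - 1 / real (Suc k) \<le> X n" using h by blast
    have "norm (X n - 1) < r" if "N \<le> n" for n
    proof -
      have "1 - 1 / real (Suc k) \<le> X n" using N that by blast
      moreover have "norm (X n - 1) = 1 - X n" using assms[of n] by simp
      ultimately show ?thesis using k by (simp add: inverse_eq_divide)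
    qed
    then show "\<exists>no. \<forall>n\<ge>no. norm (X n - 1) < r" by blast
  qed
qed

lemma Pi03_dens: "Pi03 (density_pts Uo)"
  unfolding Pi03_def
proof (intro exI conjI allI)
  let ?F = "\<lambda>k N. \<Inter>n\<in>{N..}. {x. 1 - 1 / real (Suc k) \<le> rho Uo (restr x n)}"
  fix k N
  show "closedin cantor_top (?F k N)"
    by (intro closedin_INT) (auto intro: closedin_restr)
next
  let ?F = "\<lambda>k N. \<Inter>n\<in>{N..}. {x. 1 - 1 / real (Suc k) \<le> rho Uo (restr x n)}"
  show "density_pts Uo = (\<Inter>k. \<Union>N. ?F k N)"
    unfolding dens_eq[OF Uo_sets]
  proof (intro set_eqI)
    fix x
    have "(\<lambda>n. rho Uo (restr x n)) \<longlonglongrightarrow> 1 \<longleftrightarrow> (\<forall>k. \<exists>N. \<forall>n\<ge>N. 1 - 1 / real (Suc k) \<le> rho Uo (restr x n))"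
      by (rule lim_iff) (rule rho_le1)
    also have "\<dots> \<longleftrightarrow> (\<forall>k. \<exists>N. x \<in> ?F k N)"
    proof -
      have "x \<in> ?F k N \<longleftrightarrow> (\<forall>n\<ge>N. 1 - 1 / real (Suc k) \<le> rho Uo (restr x n))" for k N
        by auto
      then show ?thesis by presburger
    qed
    also have "\<dots> \<longleftrightarrow> x \<in> (\<Inter>k. \<Union>N. ?F k N)" by (simp only: INT_iff UN_iff UNIV_I simp_thms Ball_def Bex_def)
    finally show "x \<in> {x. (\<lambda>n. rho Uo (restr x n)) \<longlonglongrightarrow> 1} \<longleftrightarrow> x \<in> (\<Inter>k. \<Union>N. ?F k N)" by simp
  qed
qed

lemma reduce:
  assumes "Pi03 Y"
  shows "\<exists>f. continuous_map cantor_top cantor_top f \<and> Y = f -` density_pts Uo"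
proof -
  define F where "F = (SOME F :: nat \<Rightarrow> nat \<Rightarrow> (nat \<Rightarrow> bool) set.
      (\<forall>n m. closedin cantor_top (F n m)) \<and> Y = (\<Inter>n. \<Union>m. F n m))"
  have FF: "(\<forall>n m. closedin cantor_top (F n m)) \<and> Y = (\<Inter>n. \<Union>m. F n m)"
    unfolding F_def by (rule someI_ex[OF assms[unfolded Pi03_def]])
  have cl: "\<forall>n m. closedin cantor_top (F n m)" using FF by (rule conjunct1)
  have Y: "Y = (\<Inter>n. \<Union>m. F n m)" using FF by (rule conjunct2)
  have "x \<in> Y \<longleftrightarrow> out (bb F x) \<in> density_pts Uo" for x
  proof -
    have "x \<in> Y \<longleftrightarrow> (\<forall>n. \<exists>i. x \<in> F n i)" using Y by auto
    also have "\<dots> \<longleftrightarrow> (\<forall>n. finite {k. cc F n x k})" using mem_iff[OF cl] by blast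
    also have "\<dots> \<longleftrightarrow> (\<forall>n. finite {j. bb F x j \<and> rowj j = n})" using row_fin by blast
    also have "\<dots> \<longleftrightarrow> Cond (out (bb F x))" by (simp add: Cond_def Jx_out)
    also have "\<dots> \<longleftrightarrow> out (bb F x) \<in> density_pts Uo"
      using bU.char[OF out_spine] dens_eq[OF Uo_sets] by auto
    finally show ?thesis .
  qed
  then have "Y = (\<lambda>x. out (bb F x)) -` density_pts Uo" by auto
  then show ?thesis using f_cont by blast
qed

theorem theorem1p2:
  shows "\<exists>U C. openin cantor_top U \<and> closedin cantor_top C \<and>
           density_pts U = density_pts C \<and> complete_Pi03 (density_pts U)"
proof (intro exI conjI)
  show "openin cantor_top Uo" by (rule Uo_open)
  show "closedin cantor_top Cc" by (rule Cc_closed)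
  show "density_pts Uo = density_pts Cc" by (rule dens_UC)
  show "complete_Pi03 (density_pts Uo)"
    unfolding complete_Pi03_def using Pi03_dens reduce by blast
qed

end
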